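(* Let $\mathcal{X}\in\mathbb{IR}^n$, $\mathcal{U}\in\mathbb{IR}^m$ be boxes, $N\in\mathbb{N}$, and let $c:\mathcal{X}\times\mathcal{U}\times\mathcal{X}\to\mathbb{R}$ be Lipschitz with constant $L_c$ with respect to the Euclidean norm on $\mathbb{R}^{n}\times\mathbb{R}^m\times\mathbb{R}^n$. Let $x^j\in\mathcal{X}$ be the known current state, and for each $q$ let $\Phi_q(x,u)=x(t_{q+1};x,u)\in\mathcal{X}$ denote the (unknown) true state at $t_{q+1}$ reached from state $x$ at $t_q$ under constant control $u$. Let $\mathcal{R}^j_{\mathcal{U}}=\{x^j\}$ and let $\mathcal{R}^{q+1}_{\mathcal{U}}\in\mathbb{IR}^n$, $q=j,\dots,j+N$, be over-approximations of the reachable set at $t_{q+1}$ from $\mathcal{R}^q_{\mathcal{U}}$ under all controls in $\mathcal{U}$, in the sense that for every $x\in\mathcal{R}^q_{\mathcal{U}}$ and $u\in\mathcal{U}$ both the true successor $\Phi_q(x,u)$ and the model's predicted successor $\hat h_q(x,u)$ lie in $\mathcal{R}^{q+1}_{\mathcal{U}}$, where $\hat h_q:\mathcal{X}\times\mathcal{U}\to\mathcal{X}$ is the one-step predictor picked inside the data-driven over-approximation of the reachable set. Let $$C_j^\star=\inf_{u^j,\dots,u^{j+N}\in\mathcal{U}}\sum_{q=j}^{j+N}c(x^q,u^q,x^{q+1}),\quad x^{q+1}=\Phi_q(x^q,u^q),$$ $$\hat C_j=\inf_{u^j,\dots,u^{j+N}\in\mathcal{U}}\sum_{q=j}^{j+N}c(\hat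 x^q,u^q,\hat x^{q+1}),\quad \hat x^j=x^j,\ \hat x^{q+1}=\hat h_q(\hat x^q,u^q).$$ Then $$|C_j^\star-\hat C_j|\le L_c\Big(\|\mathrm{wd}(\mathcal{R}^{j+N+1}_{\mathcal{U}})\|_2+\sum_{q=j+1}^{j+N}2\,\|\mathrm{wd}(\mathcal{R}^q_{\mathcal{U}})\|_2\Big).$$
   Context: $\mathbb{IR}^n$ denotes $n$-dimensional interval vectors (boxes). For an interval vector $\mathcal{A}=[\underline{\mathcal{A}},\overline{\mathcal{A}}]$, $\mathrm{wd}(\mathcal{A})=\overline{\mathcal{A}}-\underline{\mathcal{A}}\in\mathbb{R}^n$ is its componentwise width and $\|\cdot\|_2$ the Euclidean norm. The underlying system is $\dot x=f(x)+\sum_{p=1}^dg_p(x)u[\alpha^p]$ with unknown $f,g_p$, sampled at times $t_q=t_j+(q-j)\Delta t$, with control held constant on each $[t_q,t_{q+1}]$; the sets $\mathcal{R}^{q+1}_{\mathcal{U}}$ are computed by the data-driven interval Taylor over-approximation formula applied to the initial set $\mathcal{R}^q_{\mathcal{U}}$ with the control value replaced by the box $\mathcal{U}$. *)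

theory Defs
  imports "HOL-Analysis.Analysis"
begin

text \<open>State trajectory starting at absolute time index j from x0, under the one-step
  map F q x u (time index q) and control sequence us (indexed by absolute time q).
  traj F j x0 us k is the state at absolute time index j + k.\<close>
fun traj :: "(nat \<Rightarrow> 'x \<Rightarrow> 'u \<Rightarrow> 'x) \<Rightarrow> nat \<Rightarrow> 'x \<Rightarrow> (nat \<Rightarrow> 'u) \<Rightarrow> nat \<Rightarrow> 'x" where
  "traj F j x0 us 0 = x0"
| "traj F j x0 us (Suc k) = F (j + k) (traj F j x0 us k) (us (j + k))"

definition horizon_cost ::
  "('x \<times> 'u \<times> 'x \<Rightarrow> real) \<Rightarrow> (nat \<Rightarrow> 'x \<Rightarrow> 'u \<Rightarrow> 'x) \<Rightarrow> nat \<Rightarrow> nat \<Rightarrow> 'x \<Rightarrow> (nat \<Rightarrow> 'u) \<Rightarrow> real" where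
  "horizon_cost c F j N x0 us =
     (\<Sum>k\<le>N. c (traj F j x0 us k, us (j + k), traj F j x0 us (Suc k)))"

definition opt_cost ::
  "('x \<times> 'u \<times> 'x \<Rightarrow> real) \<Rightarrow> (nat \<Rightarrow> 'x \<Rightarrow> 'u \<Rightarrow> 'x) \<Rightarrow> nat \<Rightarrow> nat \<Rightarrow> 'x \<Rightarrow> 'u set \<Rightarrow> real" where
  "opt_cost c F j N x0 U =
     (INF us \<in> {us. \<forall>q\<in>{j..j+N}. us q \<in> U}. horizon_cost c F j N x0 us)"

definition wd :: "'a::ab_group_add \<Rightarrow> 'a \<Rightarrow> 'a" where
  "wd lo hi = hi - lo"

end

theory Submission
  imports Defs
begin

lemma traj_in:
  assumes F: "\<And>q x u. q \<in> {j..j+N} \<Longrightarrow> x \<in> R q \<Longrightarrow> u \<in> U \<Longrightarrow> F q x u \<in> R (Suc q)"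
    and R0: "R j = {x0}" and adm: "\<forall>q\<in>{j..j+N}. us q \<in> U"
  shows "k \<le> N+1 \<Longrightarrow> traj F j x0 us k \<in> R (j+k)"
proof (induction k)
  case 0 then show ?case using R0 by simp
next
  case (Suc k)
  then have "traj F j x0 us k \<in> R (j+k)" by simp
  moreover have "j + k \<in> {j..j+N}" using Suc.prems by simp
  ultimately show ?case using F adm by simp
qed

lemma traj_X:
  assumes F: "\<And>q x u. x \<in> X \<Longrightarrow> u \<in> U \<Longrightarrow> F q x u \<in> X"
    and x0: "x0 \<in> X" and adm: "\<forall>q\<in>{j..j+N}. us q \<in> U"
  shows "k \<le> N+1 \<Longrightarrow> traj F j x0 us k \<in> X"
proof (induction k)
  case 0 then show ?case using x0 by simp
next
  case (Suc k)
  then have "traj F j x0 us k \<in> X" by simp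
  moreover have "j + k \<in> {j..j+N}" using Suc.prems by simp
  ultimately show ?case using F adm by simp
qed

lemma box_dist:
  fixes x y a b :: "real ^ 'n"
  assumes "x \<in> cbox a b" "y \<in> cbox a b"
  shows "dist x y \<le> norm (wd a b)"
  unfolding dist_norm wd_def
proof (rule norm_le_componentwise_cart)
  fix i
  have "a $ i \<le> x $ i" "x $ i \<le> b $ i" "a $ i \<le> y $ i" "y $ i \<le> b $ i"
    using assms by (auto simp: mem_box_cart)
  then show "norm ((x - y) $ i) \<le> norm ((b - a) $ i)" by auto
qed

lemma dist3:
  "dist (a::'a::metric_space, u::'b::metric_space, b::'c::metric_space) (a', u, b') \<le> dist a a' + dist b b'"
proof -
  have "dist (a, u, b) (a', u, b') = sqrt ((dist a a')\<^sup>2 + (dist b b')\<^sup>2)"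
    by (simp add: dist_Pair_Pair)
  also have "\<dots> \<le> sqrt ((dist a a')\<^sup>2) + sqrt ((dist b b')\<^sup>2)"
    by (rule sqrt_add_le_add_sqrt) auto
  also have "\<dots> = dist a a' + dist b b'" by simp
  finally show ?thesis .
qed

lemma sum_bound:
  fixes d w :: "nat \<Rightarrow> real"
  assumes "d 0 = 0" "\<And>k. 1 \<le> k \<Longrightarrow> k \<le> N+1 \<Longrightarrow> d k \<le> w k"
  shows "(\<Sum>k\<le>N. d k + d (Suc k)) \<le> w (N+1) + (\<Sum>k\<in>{1..N}. 2 * w k)"
  using assms(2)
proof (induction N)
  case 0 then show ?case using assms(1) by simp
next
  case (Suc N)
  have IH: "(\<Sum>k\<le>N. d k + d (Suc k)) \<le> w (N+1) + (\<Sum>k\<in>{1..N}. 2 * w k)"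
    using Suc by simp
  have "d (Suc N) \<le> w (Suc N)" "d (Suc (Suc N)) \<le> w (Suc (Suc N))" using Suc.prems by auto
  moreover have "(\<Sum>k\<in>{1..Suc N}. 2 * w k) = (\<Sum>k\<in>{1..N}. 2 * w k) + 2 * w (Suc N)"
    by simp
  ultimately show ?case using IH by simp
qed

lemma inf_diff:
  fixes f g :: "'a \<Rightarrow> real"
  assumes ne: "S \<noteq> {}" and bdd: "bdd_below (f ` S)"
    and fg: "\<And>s. s \<in> S \<Longrightarrow> \<bar>f s - g s\<bar> \<le> B"
  shows "\<bar>(INF s\<in>S. f s) - (INF s\<in>S. g s)\<bar> \<le> B"
proof -
  obtain m where m: "\<And>s. s \<in> S \<Longrightarrow> m \<le> f s" using bdd by (auto simp: bdd_below_def)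
  have bddg: "bdd_below (g ` S)"
    unfolding bdd_below_def
  proof (intro exI ballI)
    fix y assume "y \<in> g ` S"
    then obtain s where "s \<in> S" "y = g s" by auto
    then show "m - B \<le> y" using m[of s] fg[of s] by auto
  qed
  have 1: "(INF s\<in>S. f s) - B \<le> (INF s\<in>S. g s)"
  proof -
    have "(INF s\<in>S. f s) \<le> g s + B" if "s \<in> S" for s
      using cINF_lower[OF bdd that] fg[OF that] by auto
    then have "(INF s\<in>S. f s) - B \<le> g s" if "s \<in> S" for s using that by fastforce
    then show ?thesis by (intro cINF_greatest[OF ne]) auto
  qed
  have 2: "(INF s\<in>S. g s) - B \<le> (INF s\<in>S. f s)"
  proof -
    have "(INF s\<in>S. g s) \<le> f s + B" if "s \<in> S" for s
      using cINF_lower[OF bddg that] fg[OF that] by auto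
    then have "(INF s\<in>S. g s) - B \<le> f s" if "s \<in> S" for s using that by fastforce
    then show ?thesis by (intro cINF_greatest[OF ne]) auto
  qed
  from 1 2 show ?thesis by linarith
qed

theorem theorem3:
  fixes xl xu :: "real ^ 'n" and ul uu :: "real ^ 'm"
    and N j :: nat
    and c :: "(real ^ 'n) \<times> (real ^ 'm) \<times> (real ^ 'n) \<Rightarrow> real" and Lc :: real
    and xj :: "real ^ 'n"
    and \<Phi> hhat :: "nat \<Rightarrow> real ^ 'n \<Rightarrow> real ^ 'm \<Rightarrow> real ^ 'n"
    and Rl Ru :: "nat \<Rightarrow> real ^ 'n"
    and R :: "nat \<Rightarrow> (real ^ 'n) set"
  assumes X_box: "xl \<le> xu" and U_box: "ul \<le> uu"
    and lip: "lipschitz_on Lc (cbox xl xu \<times> cbox ul uu \<times> cbox xl xu) c"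
    and xj_in: "xj \<in> cbox xl xu"
    and Phi_X: "\<And>q x u. x \<in> cbox xl xu \<Longrightarrow> u \<in> cbox ul uu \<Longrightarrow> \<Phi> q x u \<in> cbox xl xu"
    and hhat_X: "\<And>q x u. x \<in> cbox xl xu \<Longrightarrow> u \<in> cbox ul uu \<Longrightarrow> hhat q x u \<in> cbox xl xu"
    and R_j: "R j = {xj}"
    and R_box: "\<And>q. q \<in> {j+1..j+N+1} \<Longrightarrow> R q = cbox (Rl q) (Ru q)"
    and R_over: "\<And>q x u. q \<in> {j..j+N} \<Longrightarrow> x \<in> R q \<Longrightarrow> u \<in> cbox ul uu \<Longrightarrow>
                   \<Phi> q x u \<in> R (Suc q) \<and> hhat q x u \<in> R (Suc q)"
  shows "\<bar>opt_cost c \<Phi> j N xj (cbox ul uu) - opt_cost c hhat j N xj (cbox ul uu)\<bar>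
           \<le> Lc * (norm (wd (Rl (j+N+1)) (Ru (j+N+1)))
                   + (\<Sum>q\<in>{j+1..j+N}. 2 * norm (wd (Rl q) (Ru q))))"
proof -
  define U where "U = cbox ul uu"
  define X where "X = cbox xl xu"
  define D where "D = X \<times> U \<times> X"
  define S where "S = {us. \<forall>q\<in>{j..j+N}. us q \<in> U}"
  define w where "w k = norm (wd (Rl (j+k)) (Ru (j+k)))" for k
  have Lc0: "0 \<le> Lc" using lip by (simp add: lipschitz_on_def)
  have ulU: "ul \<in> U" using U_box unfolding U_def
    by (auto simp: mem_box_cart less_eq_vec_def)
  have neS: "S \<noteq> {}" using ulU unfolding S_def by (intro ex_in_conv[THEN iffD1] exI[of _ "\<lambda>_. ul"]) auto
  have "compact D" unfolding D_def X_def U_def by (intro compact_Times compact_cbox)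
  moreover have "continuous_on D c" using lipschitz_on_continuous_on[OF lip]
    unfolding D_def X_def U_def .
  ultimately have "compact (c ` D)" by (simp add: compact_continuous_image)
  then have "bounded (c ` D)" by (rule compact_imp_bounded)
  then obtain M where M: "\<And>p. p \<in> D \<Longrightarrow> \<bar>c p\<bar> \<le> M"
    unfolding bounded_iff by auto
  have xXg: "traj \<Phi> j xj us k \<in> X \<and> traj hhat j xj us k \<in> X" if "us \<in> S" "k \<le> N+1" for us k
  proof -
    have adm: "\<forall>q\<in>{j..j+N}. us q \<in> U" using that by (simp add: S_def)
    have PX: "\<And>q x u. x \<in> X \<Longrightarrow> u \<in> U \<Longrightarrow> \<Phi> q x u \<in> X"
      using Phi_X by (simp add: X_def U_def)
    have HX: "\<And>q x u. x \<in> X \<Longrightarrow> u \<in> U \<Longrightarrow> hhat q x u \<in> X"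
      using hhat_X by (simp add: X_def U_def)
    have x0: "xj \<in> X" using xj_in by (simp add: X_def)
    show ?thesis using traj_X[OF PX x0 adm that(2)] traj_X[OF HX x0 adm that(2)] by simp
  qed
  have bdd: "bdd_below ((\<lambda>us. horizon_cost c \<Phi> j N xj us) ` S)"
    unfolding bdd_below_def
  proof (intro exI ballI)
    fix y assume "y \<in> (\<lambda>us. horizon_cost c \<Phi> j N xj us) ` S"
    then obtain us where us: "us \<in> S" "y = horizon_cost c \<Phi> j N xj us" by auto
    have "(\<Sum>k\<le>N. - M) \<le> (\<Sum>k\<le>N. c (traj \<Phi> j xj us k, us (j + k), traj \<Phi> j xj us (Suc k)))"
    proof (rule sum_mono)
      fix k assume k: "k \<in> {..N}"
      have "(traj \<Phi> j xj us k, us (j + k), traj \<Phi> j xj us (Suc k)) \<in> D"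
        unfolding D_def using k us(1) xXg[of us k] xXg[of us "Suc k"] by (auto simp: S_def)
      from M[OF this] show "- M \<le> c (traj \<Phi> j xj us k, us (j + k), traj \<Phi> j xj us (Suc k))"
        by linarith
    qed
    then show "(\<Sum>k\<le>N. - M) \<le> y" using us by (simp add: horizon_cost_def)
  qed
  have main: "\<bar>horizon_cost c \<Phi> j N xj us - horizon_cost c hhat j N xj us\<bar>
      \<le> Lc * (w (N+1) + (\<Sum>k\<in>{1..N}. 2 * w k))" if us: "us \<in> S" for us
  proof -
    let ?x = "traj \<Phi> j xj us" and ?y = "traj hhat j xj us"
    define d where "d k = dist (?x k) (?y k)" for k
    have adm: "\<forall>q\<in>{j..j+N}. us q \<in> U" using us by (simp add: S_def)
    have xX: "?x k \<in> X" "?y k \<in> X" if "k \<le> N+1" for k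
      using xXg[OF us that] by auto
    have xR: "?x k \<in> R (j+k)" "?y k \<in> R (j+k)" if "k \<le> N+1" for k
      using that adm R_j R_over by (auto intro!: traj_in[where R=R and U=U and N=N] simp: U_def)
    have dk: "d k \<le> w k" if "1 \<le> k" "k \<le> N+1" for k
    proof -
      have "R (j+k) = cbox (Rl (j+k)) (Ru (j+k))" using that by (intro R_box) auto
      then show ?thesis using xR[OF that(2)] unfolding d_def w_def by (auto intro: box_dist)
    qed
    have stage: "\<bar>c (?x k, us (j+k), ?x (Suc k)) - c (?y k, us (j+k), ?y (Suc k))\<bar>
        \<le> Lc * (d k + d (Suc k))" if "k \<le> N" for k
    proof -
      have "us (j+k) \<in> U" using adm that by auto
      then have "(?x k, us (j+k), ?x (Suc k)) \<in> D" "(?y k, us (j+k), ?y (Suc k)) \<in> D"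
        using xX[of k] xX[of "Suc k"] that unfolding D_def by (simp_all del: traj.simps)
      then have "dist (c (?x k, us (j+k), ?x (Suc k))) (c (?y k, us (j+k), ?y (Suc k)))
          \<le> Lc * dist (?x k, us (j+k), ?x (Suc k)) (?y k, us (j+k), ?y (Suc k))"
        using lip unfolding lipschitz_on_def D_def X_def U_def by blast
      also have "\<dots> \<le> Lc * (d k + d (Suc k))"
        unfolding d_def by (intro mult_left_mono[OF dist3 Lc0])
      finally show ?thesis by (simp add: dist_real_def)
    qed
    have "\<bar>horizon_cost c \<Phi> j N xj us - horizon_cost c hhat j N xj us\<bar>
        = \<bar>\<Sum>k\<le>N. c (?x k, us (j+k), ?x (Suc k)) - c (?y k, us (j+k), ?y (Suc k))\<bar>"
      by (simp add: horizon_cost_def sum_subtractf)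
    also have "\<dots> \<le> (\<Sum>k\<le>N. \<bar>c (?x k, us (j+k), ?x (Suc k)) - c (?y k, us (j+k), ?y (Suc k))\<bar>)"
      by (rule sum_abs)
    also have "\<dots> \<le> (\<Sum>k\<le>N. Lc * (d k + d (Suc k)))"
      by (rule sum_mono) (use stage in auto)
    also have "\<dots> = Lc * (\<Sum>k\<le>N. d k + d (Suc k))" by (simp add: sum_distrib_left)
    also have "\<dots> \<le> Lc * (w (N+1) + (\<Sum>k\<in>{1..N}. 2 * w k))"
      by (intro mult_left_mono[OF _ Lc0] sum_bound) (use dk in \<open>auto simp: d_def\<close>)
    finally show ?thesis .
  qed
  have "\<bar>opt_cost c \<Phi> j N xj (cbox ul uu) - opt_cost c hhat j N xj (cbox ul uu)\<bar>
      \<le> Lc * (w (N+1) + (\<Sum>k\<in>{1..N}. 2 * w k))"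
    unfolding opt_cost_def U_def[symmetric] S_def[symmetric]
    by (rule inf_diff[OF neS bdd main])
  moreover have "(\<Sum>q\<in>{j+1..j+N}. 2 * norm (wd (Rl q) (Ru q))) = (\<Sum>k\<in>{1..N}. 2 * w k)"
    unfolding w_def using sum.shift_bounds_cl_nat_ivl[of "\<lambda>q. 2 * norm (wd (Rl q) (Ru q))" 1 j N]
    by (simp add: add.commute)
  moreover have "w (N+1) = norm (wd (Rl (j+N+1)) (Ru (j+N+1)))" by (simp add: w_def)
  ultimately show ?thesis by simp
qed

end
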